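(* Let $\Gamma$ be a metrized graph with $v$ vertices, and let $p\in V(\Gamma)$. Then $$2(v-2)Kf(\Gamma)=2\sum_{e_i \in E(\Gamma)} \frac{R_i}{L_i+R_i} Kf(\overline{\Gamma}_i) + 2v \sum_{e_i \in E(\Gamma)} \frac{L_i R_{a_i,p} R_{b_i,p}}{(L_i+R_i)^2}-v \sum_{e_i \in E(\Gamma)} \frac{L_i R_i^2}{(L_i+R_i)^2} + \sum_{w \in V(\Gamma)}\sum_{e_i \in E(\Gamma)} \frac{R_i}{L_i+R_i} \big(r(p_i,w)+r(q_i,w)\big),$$ where $p_i,q_i$ denote the end points of $e_i$.
   Context: A metrized graph $\Gamma$ is a finite connected graph (multiple edges and self-loops allowed) each of whose edges is identified with a closed segment of positive length, with a finite nonempty vertex set $V(\Gamma)$ containing every point of valence $\neq2$; $v=\#V(\Gamma)$, $E(\Gamma)$ its edge set, $L_i$ the length of $e_i$, $r$ the effective resistance (edges as resistors of resistance equal to length). $Kf(\Gamma)=\frac12\sum_{p,q\in V(\Gamma)}r(p,q)$. For an edge $e_i$ with end points $p_i,q_i$: if $\Gamma-e_i$ (interior deleted) is connected, $R_i$ is the effective resistance between $p_i,q_i$ in $\Gamma-e_i$, $R_{a_i,p}=\hat j_{p_i}(p,q_i)$, $R_{b_i,p}=\hat j_{q_i}(p,p_i)$ with $\hat j_z(x,y)$ the voltage function of $\Gamma-e_i$ (potential at $x$ when unit current enters at $y$ and exits at $z$, potential $0$ at $z$); if $e_i$ is a bridge, $R_{a_i,p}=0,R_{b_i,p}=R_i$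 for $p$ in the component of $\Gamma-e_i$ containing $p_i$ and $R_{a_i,p}=R_i,R_{b_i,p}=0$ otherwise, with every expression in $R_i$ interpreted as its limit as $R_i\to\infty$; for a self-loop $R_i=0$. $\overline\Gamma_i$ is obtained by contracting $e_i$ to a point, with vertex set the image of $V(\Gamma)$. *)

theory Defs
  imports Complex_Main
begin

text \<open>A metrized graph is encoded by its (finite) vertex set V, a finite set of edge names E,
  the end points of each edge (ends e = (p_e, q_e); a self-loop has p_e = q_e) and the
  edge lengths Len e > 0.  Since V contains every point of valence different from 2,
  the effective resistance between vertices is that of the resistor network with the
  edges as resistors of resistance Len e.\<close>

definition adj :: "'e set \<Rightarrow> ('e \<Rightarrow> 'v \<times> 'v) \<Rightarrow> ('v \<times> 'v) set" where
  "adj E ends = {(x, y). \<exists>e\<in>E. ends e = (x, y) \<or> ends e = (y, x)}"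

definition graph_connected :: "'v set \<Rightarrow> 'e set \<Rightarrow> ('e \<Rightarrow> 'v \<times> 'v) \<Rightarrow> bool" where
  "graph_connected V E ends \<longleftrightarrow> (\<forall>x\<in>V. \<forall>y\<in>V. (x, y) \<in> (adj E ends)\<^sup>*)"

definition metrized_graph :: "'v set \<Rightarrow> 'e set \<Rightarrow> ('e \<Rightarrow> 'v \<times> 'v) \<Rightarrow> ('e \<Rightarrow> real) \<Rightarrow> bool" where
  "metrized_graph V E ends Len \<longleftrightarrow> finite V \<and> V \<noteq> {} \<and> finite E \<and>
     (\<forall>e\<in>E. fst (ends e) \<in> V \<and> snd (ends e) \<in> V \<and> Len e > 0) \<and>
     graph_connected V E ends"

text \<open>f is the voltage (potential) when unit current enters at y and exits at z,
  with potential 0 at z (Kirchhoff's current law at each vertex).\<close>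
definition is_voltage :: "'v set \<Rightarrow> 'e set \<Rightarrow> ('e \<Rightarrow> 'v \<times> 'v) \<Rightarrow> ('e \<Rightarrow> real)
    \<Rightarrow> 'v \<Rightarrow> 'v \<Rightarrow> ('v \<Rightarrow> real) \<Rightarrow> bool" where
  "is_voltage V E ends Len z y f \<longleftrightarrow> f z = 0 \<and>
     (\<forall>x\<in>V. (\<Sum>e\<in>E. (if fst (ends e) = x then (f x - f (snd (ends e))) / Len e else 0)
                     + (if snd (ends e) = x then (f x - f (fst (ends e))) / Len e else 0))
            = (if x = y then 1 else 0) - (if x = z then 1 else 0))"

definition jvolt :: "'v set \<Rightarrow> 'e set \<Rightarrow> ('e \<Rightarrow> 'v \<times> 'v) \<Rightarrow> ('e \<Rightarrow> real)
    \<Rightarrow> 'v \<Rightarrow> 'v \<Rightarrow> 'v \<Rightarrow> real" where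
  "jvolt V E ends Len z x y = (THE c. \<exists>f. is_voltage V E ends Len z y f \<and> f x = c)"

definition eff_res :: "'v set \<Rightarrow> 'e set \<Rightarrow> ('e \<Rightarrow> 'v \<times> 'v) \<Rightarrow> ('e \<Rightarrow> real)
    \<Rightarrow> 'v \<Rightarrow> 'v \<Rightarrow> real" where
  "eff_res V E ends Len x y = jvolt V E ends Len y x x"

definition Kf :: "'v set \<Rightarrow> 'e set \<Rightarrow> ('e \<Rightarrow> 'v \<times> 'v) \<Rightarrow> ('e \<Rightarrow> real) \<Rightarrow> real" where
  "Kf V E ends Len = (1/2) * (\<Sum>p\<in>V. \<Sum>q\<in>V. eff_res V E ends Len p q)"

definition contr_map :: "('e \<Rightarrow> 'v \<times> 'v) \<Rightarrow> 'e \<Rightarrow> 'v \<Rightarrow> 'v" where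
  "contr_map ends e x = (if x = snd (ends e) then fst (ends e) else x)"

definition Kf_contract :: "'v set \<Rightarrow> 'e set \<Rightarrow> ('e \<Rightarrow> 'v \<times> 'v) \<Rightarrow> ('e \<Rightarrow> real) \<Rightarrow> 'e \<Rightarrow> real" where
  "Kf_contract V E ends Len e =
     Kf (contr_map ends e ` V) (E - {e}) (map_prod (contr_map ends e) (contr_map ends e) \<circ> ends) Len"

definition is_bridge :: "'v set \<Rightarrow> 'e set \<Rightarrow> ('e \<Rightarrow> 'v \<times> 'v) \<Rightarrow> 'e \<Rightarrow> bool" where
  "is_bridge V E ends e \<longleftrightarrow> \<not> graph_connected V (E - {e}) ends"

definition R_edge :: "'v set \<Rightarrow> 'e set \<Rightarrow> ('e \<Rightarrow> 'v \<times> 'v) \<Rightarrow> ('e \<Rightarrow> real) \<Rightarrow> 'e \<Rightarrow> real" where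
  "R_edge V E ends Len e = eff_res V (E - {e}) ends Len (fst (ends e)) (snd (ends e))"

text \<open>For a
  bridge, R_{a_e,p}, R_{b_e,p} are 0 or R_e according to the component of p in \<Gamma> - e,
  and the expression is interpreted as its limit as R_e \<rightarrow> \<infinity>.\<close>
definition edge_val :: "'v set \<Rightarrow> 'e set \<Rightarrow> ('e \<Rightarrow> 'v \<times> 'v) \<Rightarrow> ('e \<Rightarrow> real) \<Rightarrow> 'v \<Rightarrow> 'e
    \<Rightarrow> (real \<Rightarrow> real \<Rightarrow> real \<Rightarrow> real) \<Rightarrow> real" where
  "edge_val V E ends Len p e F =
     (if is_bridge V E ends e then
        (let inA = ((fst (ends e), p) \<in> (adj (E - {e}) ends)\<^sup>*) in
         Lim at_top (\<lambda>R. F R (if inA then 0 else R) (if inA then R else 0)))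
      else
        F (R_edge V E ends Len e)
          (jvolt V (E - {e}) ends Len (fst (ends e)) p (snd (ends e)))
          (jvolt V (E - {e}) ends Len (snd (ends e)) p (fst (ends e))))"

end

theory Submission
  imports Defs "HOL-Library.Function_Algebras"
begin

definition lap :: "'e set \<Rightarrow> ('e \<Rightarrow> 'v \<times> 'v) \<Rightarrow> ('e \<Rightarrow> real) \<Rightarrow> ('v \<Rightarrow> real) \<Rightarrow> 'v \<Rightarrow> real" where
  "lap E ends Len f x = (\<Sum>e\<in>E. (if fst (ends e) = x then (f x - f (snd (ends e))) / Len e else 0)
                     + (if snd (ends e) = x then (f x - f (fst (ends e))) / Len e else 0))"

definition netw :: "'v set \<Rightarrow> 'e set \<Rightarrow> ('e \<Rightarrow> 'v \<times> 'v) \<Rightarrow> ('e \<Rightarrow> real) \<Rightarrow> bool" where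
  "netw V E ends Len \<longleftrightarrow> finite V \<and> finite E \<and> (\<forall>e\<in>E. fst (ends e) \<in> V \<and> snd (ends e) \<in> V \<and> Len e > 0)"

lemma is_voltage_lap: "is_voltage V E ends Len z y f \<longleftrightarrow> f z = 0 \<and>
   (\<forall>x\<in>V. lap E ends Len f x = (if x = y then 1 else 0) - (if x = z then 1 else 0))"
  by (simp add: is_voltage_def lap_def)

lemma green:
  assumes "netw V E ends Len"
  shows "(\<Sum>x\<in>V. g x * lap E ends Len f x) =
     (\<Sum>e\<in>E. (f (fst (ends e)) - f (snd (ends e))) * (g (fst (ends e)) - g (snd (ends e))) / Len e)"
proof -
  have "(\<Sum>x\<in>V. g x * lap E ends Len f x) = (\<Sum>x\<in>V. \<Sum>e\<in>E.
       (if fst (ends e) = x then g x * ((f x - f (snd (ends e))) / Len e) else 0)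
     + (if snd (ends e) = x then g x * ((f x - f (fst (ends e))) / Len e) else 0))"
    unfolding lap_def sum_distrib_left by (rule sum.cong[OF refl], rule sum.cong[OF refl]) (auto simp: distrib_left)
  also have "\<dots> = (\<Sum>e\<in>E. \<Sum>x\<in>V.
       (if fst (ends e) = x then g x * ((f x - f (snd (ends e))) / Len e) else 0)
     + (if snd (ends e) = x then g x * ((f x - f (fst (ends e))) / Len e) else 0))"
    by (rule sum.swap)
  also have "\<dots> = (\<Sum>e\<in>E. (f (fst (ends e)) - f (snd (ends e))) * (g (fst (ends e)) - g (snd (ends e))) / Len e)"
  proof (rule sum.cong[OF refl])
    fix e assume "e \<in> E"
    then have V: "fst (ends e) \<in> V" "snd (ends e) \<in> V" using assms by (auto simp: netw_def)
    have "(\<Sum>x\<in>V. (if fst (ends e) = x then g x * ((f x - f (snd (ends e))) / Len e) else 0)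
     + (if snd (ends e) = x then g x * ((f x - f (fst (ends e))) / Len e) else 0))
       = g (fst (ends e)) * ((f (fst (ends e)) - f (snd (ends e))) / Len e)
         + g (snd (ends e)) * ((f (snd (ends e)) - f (fst (ends e))) / Len e)"
      using V assms by (simp add: sum.distrib netw_def)
    also have "\<dots> = (f (fst (ends e)) - f (snd (ends e))) * (g (fst (ends e)) - g (snd (ends e))) / Len e"
      by (simp add: divide_inverse algebra_simps)
    finally show "(\<Sum>x\<in>V. (if fst (ends e) = x then g x * ((f x - f (snd (ends e))) / Len e) else 0)
     + (if snd (ends e) = x then g x * ((f x - f (fst (ends e))) / Len e) else 0)) =
       (f (fst (ends e)) - f (snd (ends e))) * (g (fst (ends e)) - g (snd (ends e))) / Len e" .
  qed
  finally show ?thesis .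
qed

lemma lap_sum0:
  assumes "netw V E ends Len"
  shows "(\<Sum>x\<in>V. lap E ends Len f x) = 0"
  using green[OF assms, of "\<lambda>_. 1" f] by simp

lemma lap_add: "lap E ends Len (\<lambda>w. f w + g w) x = lap E ends Len f x + lap E ends Len g x"
  unfolding lap_def sum.distrib[symmetric] by (rule sum.cong) (auto simp: divide_inverse algebra_simps)

lemma lap_diff: "lap E ends Len (\<lambda>w. f w - g w) x = lap E ends Len f x - lap E ends Len g x"
  unfolding lap_def sum_subtractf[symmetric] by (rule sum.cong) (auto simp: divide_inverse algebra_simps)

lemma lap_scale: "lap E ends Len (\<lambda>w. c * f w) x = c * lap E ends Len f x"
  unfolding lap_def sum_distrib_left by (rule sum.cong) (auto simp: divide_inverse algebra_simps)

lemma lap_const: "lap E ends Len (\<lambda>w. f w + k) x = lap E ends Len f x"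
  unfolding lap_def by (rule sum.cong) auto

lemma edges_const:
  assumes "netw V E ends Len" and h: "\<forall>x\<in>V. lap E ends Len f x = 0"
  shows "\<forall>e\<in>E. f (fst (ends e)) = f (snd (ends e))"
proof -
  have "(\<Sum>e\<in>E. (f (fst (ends e)) - f (snd (ends e))) * (f (fst (ends e)) - f (snd (ends e))) / Len e) = 0"
    using green[OF assms(1), of f f] h by simp
  moreover have "\<forall>e\<in>E. (f (fst (ends e)) - f (snd (ends e))) * (f (fst (ends e)) - f (snd (ends e))) / Len e \<ge> 0"
    using assms(1) by (auto simp: netw_def)
  ultimately have "\<forall>e\<in>E. (f (fst (ends e)) - f (snd (ends e))) * (f (fst (ends e)) - f (snd (ends e))) / Len e = 0"
    using assms(1) unfolding netw_def by (subst (asm) sum_nonneg_eq_0_iff) auto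
  then show ?thesis using assms(1) unfolding netw_def by force
qed

lemma rtrancl_const:
  assumes "\<forall>e\<in>E. f (fst (ends e)) = f (snd (ends e))" and "(x, y) \<in> (adj E ends)\<^sup>*"
  shows "f x = f y"
  using assms(2)
proof (induction rule: rtrancl_induct)
  case base then show ?case by simp
next
  case (step y z)
  then show ?case using assms(1) by (auto simp: adj_def)
qed

lemma harmonic_const:
  assumes "netw V E ends Len" "graph_connected V E ends" "\<forall>x\<in>V. lap E ends Len f x = 0" "x \<in> V" "z \<in> V"
  shows "f x = f z"
  using rtrancl_const[OF edges_const[OF assms(1,3)]] assms(2,4,5) by (auto simp: graph_connected_def)


lemma fun_sum_apply: "finite A \<Longrightarrow> (\<Sum>i\<in>A. (f i :: 'v \<Rightarrow> real)) w = (\<Sum>i\<in>A. f i w)"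
  by (induction A rule: finite_induct) (auto simp: plus_fun_def)

lemma lap_exists:
  fixes V :: "'v set" and s :: "'v \<Rightarrow> real"
  assumes N: "netw V E ends Len" and C: "graph_connected V E ends" and z: "z \<in> V"
    and s0: "(\<Sum>x\<in>V. s x) = 0"
  shows "\<exists>f. f z = 0 \<and> (\<forall>x\<in>V. lap E ends Len f x = s x)"
proof -
  interpret vs: vector_space "\<lambda>(c::real) (f::'v\<Rightarrow>real) x. c * f x"
    by unfold_locales (auto simp: plus_fun_def fun_eq_iff algebra_simps)
  define T :: "('v \<Rightarrow> real) \<Rightarrow> 'v \<Rightarrow> real" where "T = (\<lambda>f x. if x \<in> V then lap E ends Len f x + (if x = z then f z else 0) else 0)"
  interpret h: module_hom "\<lambda>(c::real) (f::'v\<Rightarrow>real) x. c * f x" "\<lambda>(c::real) (f::'v\<Rightarrow>real) x. c * f x" T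
  proof unfold_locales
    fix f g show "T (f + g) = T f + T g"
      using lap_add[of E ends Len f g] by (auto simp: T_def plus_fun_def fun_eq_iff)
  next
    fix c f show "T (\<lambda>w. c * f w) = (\<lambda>w. c * T f w)"
      using lap_scale[of E ends Len c f] by (auto simp: T_def fun_eq_iff algebra_simps)
  qed
  define dl where "dl = (\<lambda>x::'v. \<lambda>w::'v. if w = x then (1::real) else 0)"
  define D where "D = dl ` V"
  have finV: "finite V" using N by (simp add: netw_def)
  have finD: "finite D" using finV by (simp add: D_def)
  have injdl: "inj_on dl V" by (auto simp: inj_on_def dl_def fun_eq_iff)
  have cardD: "card D = card V" using injdl by (simp add: D_def card_image)
  have supp_span: "f \<in> vs.span D" if "\<forall>w. w \<notin> V \<longrightarrow> f w = 0" for f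
  proof -
    have "f = (\<Sum>x\<in>V. (\<lambda>w. f x * dl x w))"
      using that finV by (auto simp: fun_eq_iff fun_sum_apply dl_def if_distrib cong: if_cong)
    also have "\<dots> \<in> vs.span D"
      by (intro vs.span_sum vs.span_scale vs.span_base) (auto simp: D_def)
    finally show ?thesis .
  qed
  have span_supp: "\<forall>w. w \<notin> V \<longrightarrow> f w = 0" if "f \<in> vs.span D" for f
  proof (rule vs.span_induct[OF that, where P="\<lambda>f. \<forall>w. w \<notin> V \<longrightarrow> f w = 0"])
    show "vs.subspace (Collect (\<lambda>f. \<forall>w. w \<notin> V \<longrightarrow> f w = 0))"
      by (rule vs.subspaceI) (auto simp: plus_fun_def)
  qed (auto simp: D_def dl_def)
  have T_supp: "T f \<in> vs.span D" for f by (rule supp_span) (simp add: T_def)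
  have inj: "inj_on T (vs.span D)"
  proof (rule h.inj_on_iff_eq_0[THEN iffD2], rule vs.subspace_span, intro ballI impI)
    fix f assume fD: "f \<in> vs.span D" and Tf: "T f = 0"
    have eq: "lap E ends Len f x + (if x = z then f z else 0) = 0" if "x \<in> V" for x
      using Tf that unfolding T_def fun_eq_iff zero_fun_def by (metis (full_types))
    have "(\<Sum>x\<in>V. lap E ends Len f x + (if x = z then f z else 0)) = 0"
      using eq by simp
    then have "f z = 0" using lap_sum0[OF N, of f] z finV by (simp add: sum.distrib)
    then have "\<forall>x\<in>V. lap E ends Len f x = 0" using eq by (metis add.right_neutral)
    then have "\<forall>x\<in>V. f x = f z" using harmonic_const[OF N C] z by blast
    then show "f = 0" using span_supp[OF fD] \<open>f z = 0\<close> by (auto simp: fun_eq_iff)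
  qed
  define s' where "s' = (\<lambda>x. if x \<in> V then s x else 0)"
  have s'D: "s' \<in> vs.span D" by (rule supp_span) (simp add: s'_def)
  have indD: "vs.independent D"
  proof (rule vs.independent_if_scalars_zero[OF finD])
    fix c d assume S: "(\<Sum>x\<in>D. (\<lambda>w. c x * x w)) = 0" and d: "d \<in> D"
    then obtain y where y: "y \<in> V" "d = dl y" by (auto simp: D_def)
    have "(\<Sum>x\<in>D. (\<lambda>w. c x * x w)) = (\<Sum>x\<in>V. (\<lambda>w. c (dl x) * dl x w))"
      unfolding D_def by (rule sum.reindex[OF injdl, unfolded comp_def])
    then have "0 = (\<Sum>x\<in>V. (\<lambda>w. c (dl x) * dl x w)) y" using S by simp
    also have "\<dots> = c (dl y)" using finV y by (simp add: fun_sum_apply dl_def mult.commute[of "c _"] if_distrib[of "\<lambda>t. t * _"] cong: if_cong)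
    finally show "c d = 0" using y by simp
  qed
  have "s' \<in> vs.span (T ` D)"
  proof (rule ccontr)
    assume ns: "s' \<notin> vs.span (T ` D)"
    have indTD: "vs.independent (T ` D)"
      by (rule h.independent_injective_image[OF indD inj])
    have ind2: "vs.independent (insert s' (T ` D))"
      by (rule vs.independent_insertI[OF ns indTD])
    have sub: "insert s' (T ` D) \<subseteq> vs.span D" using s'D T_supp by auto
    have "card (insert s' (T ` D)) \<le> card D"
      using vs.independent_span_bound[OF finD ind2 sub] by simp
    moreover have "s' \<notin> T ` D" using ns vs.span_base by blast
    moreover have "card (T ` D) = card D"
      using inj_on_subset[OF inj vs.span_superset] by (simp add: card_image)
    ultimately show False using finD by simp
  qed
  then have "s' \<in> T ` vs.span D" by (simp add: h.span_image)
  then obtain f where Tf: "T f = s'" by auto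
  have eq: "lap E ends Len f x + (if x = z then f z else 0) = s x" if "x \<in> V" for x
  proof -
    have "T f x = s' x" using Tf by simp
    then show ?thesis using that by (simp add: T_def s'_def)
  qed
  have "(\<Sum>x\<in>V. lap E ends Len f x + (if x = z then f z else 0)) = 0"
    using eq s0 by simp
  then have fz: "f z = 0" using lap_sum0[OF N, of f] z finV by (simp add: sum.distrib)
  then show ?thesis using eq by (intro exI[of _ f]) (metis add.right_neutral)
qed


lemma sum_mult_delta[simp]: "finite A \<Longrightarrow> (\<Sum>w\<in>A. f w * (if w = x then 1 else (0::real))) = (if x \<in> A then f x else 0)"
proof -
  assume "finite A"
  have "(\<Sum>w\<in>A. f w * (if w = x then 1 else (0::real))) = (\<Sum>w\<in>A. if w = x then f w else 0)"
    by (rule sum.cong) auto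
  then show ?thesis using \<open>finite A\<close> by simp
qed

lemma lap_cong: "(\<And>w. w \<in> V \<Longrightarrow> f w = g w) \<Longrightarrow> netw V E ends Len \<Longrightarrow> x \<in> V \<Longrightarrow>
    lap E ends Len f x = lap E ends Len g x"
  unfolding lap_def netw_def by (rule sum.cong) auto

lemma volt_exists:
  assumes N: "netw V E ends Len" and C: "graph_connected V E ends" and "y \<in> V" "z \<in> V"
  shows "\<exists>f. is_voltage V E ends Len z y f"
proof -
  have fin: "finite V" using N by (simp add: netw_def)
  have "(\<Sum>x\<in>V. (if x = y then 1 else 0) - (if x = z then 1 else (0::real))) = 0"
    using assms fin by (simp add: sum_subtractf)
  then show ?thesis using lap_exists[OF N C \<open>z \<in> V\<close>] by (auto simp: is_voltage_lap)
qed

lemma jvolt_eq: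
  assumes N: "netw V E ends Len" and C: "graph_connected V E ends" and "z \<in> V" "x \<in> V"
    and f: "is_voltage V E ends Len z y f"
  shows "jvolt V E ends Len z x y = f x"
  unfolding jvolt_def
proof (rule the_equality)
  show "\<exists>g. is_voltage V E ends Len z y g \<and> g x = f x" using f by blast
next
  fix c assume "\<exists>g. is_voltage V E ends Len z y g \<and> g x = c"
  then obtain g where g: "is_voltage V E ends Len z y g" "g x = c" by blast
  have "\<forall>w\<in>V. lap E ends Len (\<lambda>w. g w - f w) w = 0"
    using f g by (simp add: lap_diff is_voltage_lap)
  then have "g x - f x = g z - f z" using harmonic_const[OF N C _ assms(4,3), of "\<lambda>w. g w - f w"] by simp
  then show "c = f x" using f g by (simp add: is_voltage_lap)
qed

locale cnet =
  fixes V :: "'v set" and E :: "'e set" and ends :: "'e \<Rightarrow> 'v \<times> 'v" and Len :: "'e \<Rightarrow> real"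
    and g0 :: 'v
  assumes N: "netw V E ends Len" and C: "graph_connected V E ends" and g0: "g0 \<in> V"
begin

abbreviation "lp \<equiv> lap E ends Len"
definition K :: "'v \<Rightarrow> 'v \<Rightarrow> real" where "K x y = jvolt V E ends Len g0 x y"
abbreviation "a e \<equiv> fst (ends e)"
abbreviation "b e \<equiv> snd (ends e)"
definition D :: "'e \<Rightarrow> 'v \<Rightarrow> real" where "D e w = K w (a e) - K w (b e)"
abbreviation "res \<equiv> eff_res V E ends Len"

lemma finV: "finite V" and finE: "finite E" using N by (auto simp: netw_def)
lemma endsV: "e \<in> E \<Longrightarrow> a e \<in> V" "e \<in> E \<Longrightarrow> b e \<in> V" and Lpos: "e \<in> E \<Longrightarrow> Len e > 0"
  using N by (auto simp: netw_def)

lemma K_volt: assumes "y \<in> V" shows "is_voltage V E ends Len g0 y (\<lambda>x. K x y)"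
proof -
  obtain f where f: "is_voltage V E ends Len g0 y f" using volt_exists[OF N C assms g0] by blast
  have eq: "\<And>x. x \<in> V \<Longrightarrow> K x y = f x" using jvolt_eq[OF N C g0 _ f] by (simp add: K_def)
  show ?thesis using f eq g0 lap_cong[OF eq N] by (simp add: is_voltage_lap)
qed

lemma lapK: "y \<in> V \<Longrightarrow> x \<in> V \<Longrightarrow> lp (\<lambda>w. K w y) x = (if x = y then 1 else 0) - (if x = g0 then 1 else 0)"
  using K_volt by (simp add: is_voltage_lap)

lemma Kg0: "y \<in> V \<Longrightarrow> K g0 y = 0"
  using K_volt by (simp add: is_voltage_lap)

lemma green': "(\<Sum>x\<in>V. g x * lp f x) =
     (\<Sum>e\<in>E. (f (a e) - f (b e)) * (g (a e) - g (b e)) / Len e)"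
  by (rule green[OF N])

lemma K_sym: assumes "x \<in> V" "y \<in> V" shows "K x y = K y x"
proof -
  have "(\<Sum>w\<in>V. K w x * lp (\<lambda>w. K w y) w) = (\<Sum>w\<in>V. K w y * lp (\<lambda>w. K w x) w)"
    unfolding green' by (simp add: mult.commute)
  moreover have "(\<Sum>w\<in>V. K w x * lp (\<lambda>w. K w y) w) = K y x - K g0 x"
    using assms g0 finV by (simp add: lapK right_diff_distrib sum_subtractf)
  moreover have "(\<Sum>w\<in>V. K w y * lp (\<lambda>w. K w x) w) = K x y - K g0 y"
    using assms g0 finV by (simp add: lapK right_diff_distrib sum_subtractf)
  ultimately show ?thesis using Kg0 assms by simp
qed

lemma jvolt_K: assumes "x \<in> V" "y \<in> V" "z \<in> V"
  shows "jvolt V E ends Len z x y = K x y - K x z - K z y + K z z"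
proof -
  define f where "f = (\<lambda>w. K w y - K w z + (K z z - K z y))"
  have "is_voltage V E ends Len z y f"
    unfolding is_voltage_lap
  proof
    show "f z = 0" by (simp add: f_def)
    show "\<forall>x\<in>V. lp f x = (if x = y then 1 else 0) - (if x = z then 1 else 0)"
      using assms by (simp add: f_def lap_const lap_diff lapK)
  qed
  then show ?thesis using jvolt_eq[OF N C assms(3,1)] by (simp add: f_def)
qed

lemma res_K: "x \<in> V \<Longrightarrow> y \<in> V \<Longrightarrow> res x y = K x x + K y y - 2 * K x y"
  unfolding eff_res_def using jvolt_K K_sym by simp

lemma res_sym: "x \<in> V \<Longrightarrow> y \<in> V \<Longrightarrow> res x y = res y x"
  using res_K K_sym by simp

lemma res_self: "x \<in> V \<Longrightarrow> res x x = 0"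
  using res_K by simp

lemma thomson: assumes "x \<in> V" "y \<in> V"
  shows "res x y = (\<Sum>e\<in>E. (D e x - D e y)^2 / Len e)"
proof -
  define f where "f = (\<lambda>w. K w x - K w y)"
  have l: "w \<in> V \<Longrightarrow> lp f w = (if w = x then 1 else 0) - (if w = y then 1 else 0)" for w
    using assms by (simp add: f_def lap_diff lapK)
  have "(\<Sum>w\<in>V. f w * lp f w) = f x - f y"
    using assms finV by (simp add: l right_diff_distrib sum_subtractf)
  also have "\<dots> = res x y" using assms by (simp add: f_def res_K K_sym)
  finally have 1: "(\<Sum>w\<in>V. f w * lp f w) = res x y" .
  have 2: "(\<Sum>w\<in>V. f w * lp f w) = (\<Sum>e\<in>E. (D e x - D e y)^2 / Len e)"
    unfolding green'
  proof (rule sum.cong[OF refl])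
    fix e assume "e \<in> E"
    then have "f (a e) - f (b e) = D e x - D e y"
      using assms endsV by (simp add: f_def D_def K_sym)
    then show "(f (a e) - f (b e)) * (f (a e) - f (b e)) / Len e = (D e x - D e y)^2 / Len e"
      by (simp add: power2_eq_square)
  qed
  show ?thesis using 1 2 by simp
qed

lemma foster: "(\<Sum>e\<in>E. (D e (a e) - D e (b e)) / Len e) = real (card V) - 1"
proof -
  define dl where "dl = (\<lambda>x::'v. \<lambda>w::'v. if w = x then (1::real) else 0)"
  have "(\<Sum>x\<in>V. \<Sum>w\<in>V. dl x w * lp (\<lambda>w. K w x) w) = (\<Sum>x\<in>V. (1 - (if x = g0 then 1 else 0)))"
  proof (rule sum.cong[OF refl])
    fix x assume x: "x \<in> V"
    have "(\<Sum>w\<in>V. dl x w * lp (\<lambda>w. K w x) w) = (\<Sum>w\<in>V. if w = x then lp (\<lambda>w. K w x) w else 0)"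
      by (rule sum.cong) (auto simp: dl_def)
    also have "\<dots> = lp (\<lambda>w. K w x) x" using x finV by simp
    finally show "(\<Sum>w\<in>V. dl x w * lp (\<lambda>w. K w x) w) = 1 - (if x = g0 then 1 else 0)"
      using x lapK by simp
  qed
  also have "\<dots> = real (card V) - 1" using finV g0 by (simp add: sum_subtractf)
  finally have 1: "(\<Sum>x\<in>V. \<Sum>w\<in>V. dl x w * lp (\<lambda>w. K w x) w) = real (card V) - 1" .
  have "(\<Sum>x\<in>V. \<Sum>w\<in>V. dl x w * lp (\<lambda>w. K w x) w)
      = (\<Sum>x\<in>V. \<Sum>e\<in>E. (K (a e) x - K (b e) x) * (dl x (a e) - dl x (b e)) / Len e)"
    unfolding green' ..
  also have "\<dots> = (\<Sum>e\<in>E. \<Sum>x\<in>V. (K (a e) x - K (b e) x) * (dl x (a e) - dl x (b e)) / Len e)"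
    by (rule sum.swap)
  also have "\<dots> = (\<Sum>e\<in>E. (D e (a e) - D e (b e)) / Len e)"
  proof (rule sum.cong[OF refl])
    fix e assume e: "e \<in> E"
    have "(\<Sum>x\<in>V. (K (a e) x - K (b e) x) * (dl x (a e) - dl x (b e)) / Len e)
       = (\<Sum>x\<in>V. (if x = a e then (K (a e) x - K (b e) x) / Len e else 0)
                - (if x = b e then (K (a e) x - K (b e) x) / Len e else 0))"
      by (rule sum.cong) (auto simp: dl_def divide_inverse algebra_simps)
    also have "\<dots> = (K (a e) (a e) - K (b e) (a e)) / Len e - (K (a e) (b e) - K (b e) (b e)) / Len e"
      using e endsV finV by (simp add: sum_subtractf)
    also have "\<dots> = (D e (a e) - D e (b e)) / Len e"
      using e endsV by (simp add: D_def K_sym diff_divide_distrib add_divide_distrib)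
    finally show "(\<Sum>x\<in>V. (K (a e) x - K (b e) x) * (dl x (a e) - dl x (b e)) / Len e)
        = (D e (a e) - D e (b e)) / Len e" .
  qed
  finally show ?thesis using 1 by simp
qed

lemma tau: assumes "y \<in> V" "p \<in> V"
  shows "(\<Sum>e\<in>E. (D e y - D e p) * (D e y + D e p - D e (a e) - D e (b e)) / Len e) = 0"
proof -
  define f where "f = (\<lambda>w. K w y - K w p)"
  define g where "g = (\<lambda>w. K y w + K p w - K w w)"
  have l: "w \<in> V \<Longrightarrow> lp f w = (if w = y then 1 else 0) - (if w = p then 1 else 0)" for w
    using assms by (simp add: f_def lap_diff lapK)
  have "(\<Sum>w\<in>V. g w * lp f w) = g y - g p"
    using assms finV by (simp add: l right_diff_distrib sum_subtractf)
  also have "\<dots> = 0" using assms by (simp add: g_def K_sym)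
  finally have 1: "(\<Sum>w\<in>V. g w * lp f w) = 0" .
  have "(\<Sum>w\<in>V. g w * lp f w) = (\<Sum>e\<in>E. (D e y - D e p) * (D e y + D e p - D e (a e) - D e (b e)) / Len e)"
    unfolding green'
  proof (rule sum.cong[OF refl])
    fix e assume "e \<in> E"
    then have "f (a e) - f (b e) = D e y - D e p" "g (a e) - g (b e) = D e y + D e p - D e (a e) - D e (b e)"
      using assms endsV by (simp_all add: f_def g_def D_def K_sym)
    then show "(f (a e) - f (b e)) * (g (a e) - g (b e)) / Len e =
        (D e y - D e p) * (D e y + D e p - D e (a e) - D e (b e)) / Len e" by simp
  qed
  then show ?thesis using 1 by simp
qed

end

definition et :: "('e \<Rightarrow> 'v \<times> 'v) \<Rightarrow> ('e \<Rightarrow> real) \<Rightarrow> ('v \<Rightarrow> real) \<Rightarrow> 'v \<Rightarrow> 'e \<Rightarrow> real" where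
  "et ends Len f x e = (if fst (ends e) = x then (f x - f (snd (ends e))) / Len e else 0)
                     + (if snd (ends e) = x then (f x - f (fst (ends e))) / Len e else 0)"

lemma lap_et: "lap E ends Len f x = (\<Sum>e\<in>E. et ends Len f x e)"
  by (simp add: lap_def et_def)

lemma lap_remove: "finite E \<Longrightarrow> e \<in> E \<Longrightarrow> lap E ends Len f x = et ends Len f x e + lap (E - {e}) ends Len f x"
  by (simp add: lap_et sum.remove)

lemma lap_zero_edges: "\<forall>e\<in>E. f (fst (ends e)) = f (snd (ends e)) \<Longrightarrow> lap E ends Len f x = 0"
  unfolding lap_def by (rule sum.neutral) auto

lemma adj_sym: "(x, y) \<in> adj E ends \<Longrightarrow> (y, x) \<in> adj E ends"
  by (auto simp: adj_def)

lemma adj_rtrancl_sym: "(x, y) \<in> (adj E ends)\<^sup>* \<Longrightarrow> (y, x) \<in> (adj E ends)\<^sup>*"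
proof (induction rule: rtrancl_induct)
  case base then show ?case by simp
next
  case (step y z)
  then show ?case by (meson adj_sym converse_rtrancl_into_rtrancl)
qed

lemma conn_remove:
  assumes "graph_connected V E ends" "e \<in> E" "(fst (ends e), snd (ends e)) \<in> (adj (E - {e}) ends)\<^sup>*"
  shows "graph_connected V (E - {e}) ends"
proof -
  have "adj E ends \<subseteq> (adj (E - {e}) ends)\<^sup>*"
  proof
    fix p assume "p \<in> adj E ends"
    then obtain x y e' where p: "p = (x, y)" "e' \<in> E" "ends e' = (x, y) \<or> ends e' = (y, x)"
      by (auto simp: adj_def)
    show "p \<in> (adj (E - {e}) ends)\<^sup>*"
    proof (cases "e' = e")
      case True
      then have "(x, y) = (fst (ends e), snd (ends e)) \<or> (y, x) = (fst (ends e), snd (ends e))"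
        using p by auto
      then show ?thesis using assms(3) adj_rtrancl_sym p(1) by metis
    next
      case False
      then have "(x, y) \<in> adj (E - {e}) ends" using p by (auto simp: adj_def)
      then show ?thesis using p by auto
    qed
  qed
  then have "(adj E ends)\<^sup>* \<subseteq> (adj (E - {e}) ends)\<^sup>*"
    by (simp add: rtrancl_subset_rtrancl)
  then show ?thesis using assms(1) by (auto simp: graph_connected_def)
qed

lemma bridge_iff:
  assumes "graph_connected V E ends" "e \<in> E" "fst (ends e) \<in> V" "snd (ends e) \<in> V"
  shows "is_bridge V E ends e \<longleftrightarrow> (fst (ends e), snd (ends e)) \<notin> (adj (E - {e}) ends)\<^sup>*"
proof
  assume "is_bridge V E ends e"
  then show "(fst (ends e), snd (ends e)) \<notin> (adj (E - {e}) ends)\<^sup>*"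
    using conn_remove[OF assms(1,2)] by (auto simp: is_bridge_def)
next
  assume "(fst (ends e), snd (ends e)) \<notin> (adj (E - {e}) ends)\<^sup>*"
  then show "is_bridge V E ends e" using assms(3,4) unfolding is_bridge_def graph_connected_def by blast
qed

lemma netw_remove: "netw V E ends Len \<Longrightarrow> netw V (E - {e}) ends Len"
  by (auto simp: netw_def)

context cnet begin

definition u :: "'e \<Rightarrow> 'v \<Rightarrow> real" where "u e w = D e w - D e (b e)"
definition re :: "'e \<Rightarrow> real" where "re e = D e (a e) - D e (b e)"

lemma sqdiv_nonneg: "e \<in> E \<Longrightarrow> (t::real)^2 / Len e \<ge> 0"
  using Lpos[of e] by simp

lemma u_b: "u e (b e) = 0" and u_a: "u e (a e) = re e" by (simp_all add: u_def re_def)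

lemma u_jvolt: "e \<in> E \<Longrightarrow> w \<in> V \<Longrightarrow> jvolt V E ends Len (b e) w (a e) = u e w"
  using jvolt_K[of w "a e" "b e"] endsV by (simp add: u_def D_def)

lemma re_res: "e \<in> E \<Longrightarrow> res (a e) (b e) = re e"
  using res_K[of "a e" "b e"] endsV K_sym[of "a e" "b e"] by (simp add: re_def D_def)

lemma lap_u: assumes "e \<in> E" "x \<in> V"
  shows "lp (u e) x = (if x = a e then 1 else 0) - (if x = b e then 1 else 0)"
proof -
  have "u e = (\<lambda>w. (\<lambda>w. K w (a e) - K w (b e)) w + (- D e (b e)))"
    by (auto simp: u_def D_def fun_eq_iff)
  then have "lp (u e) x = lp (\<lambda>w. K w (a e) - K w (b e)) x" by (simp only: lap_const)
  then show ?thesis using assms endsV by (simp add: lap_diff lapK)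
qed

lemma D_diff: assumes "e \<in> E" "x \<in> V" "y \<in> V"
  shows "(K (a e) x - K (a e) y) - (K (b e) x - K (b e) y) = D e x - D e y"
  using assms endsV by (simp add: D_def K_sym)

lemma re_nonneg: "e \<in> E \<Longrightarrow> re e \<ge> 0"
  using thomson[of "a e" "b e"] re_res endsV sqdiv_nonneg by (auto intro!: sum_nonneg)

lemma thomson_ab: assumes "e \<in> E"
  shows "re e = re e ^ 2 / Len e + (\<Sum>e'\<in>E - {e}. (D e' (a e) - D e' (b e))^2 / Len e')"
  using thomson[of "a e" "b e"] re_res[OF assms] endsV[OF assms] assms finE
  by (simp add: sum.remove re_def)

lemma edges_D_const:
  assumes "e \<in> E" "\<forall>e'\<in>F. D e' (a e) - D e' (b e) = 0" "F \<subseteq> E"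
  shows "\<forall>e'\<in>F. (\<lambda>w. K w (a e) - K w (b e)) (a e') = (\<lambda>w. K w (a e) - K w (b e)) (b e')"
proof
  fix e' assume "e' \<in> F"
  then have "D e' (a e) - D e' (b e) = 0" "e' \<in> E" using assms by auto
  then show "(\<lambda>w. K w (a e) - K w (b e)) (a e') = (\<lambda>w. K w (a e) - K w (b e)) (b e')"
    using D_diff[of e' "a e" "b e"] assms(1) endsV by (simp add: K_sym)
qed

lemma re_pos: assumes "e \<in> E" "a e \<noteq> b e" shows "re e > 0"
proof (rule ccontr)
  assume "\<not> re e > 0"
  then have r0: "re e = 0" using re_nonneg[OF assms(1)] by simp
  have "(\<Sum>e'\<in>E. (D e' (a e) - D e' (b e))^2 / Len e') = 0"
    using thomson[of "a e" "b e"] re_res[OF assms(1)] endsV[OF assms(1)] r0 by simp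
  then have "\<forall>e'\<in>E. (D e' (a e) - D e' (b e))^2 / Len e' = 0"
    using finE sqdiv_nonneg by (subst (asm) sum_nonneg_eq_0_iff) auto
  then have "\<forall>e'\<in>E. D e' (a e) - D e' (b e) = 0" using Lpos by force
  then have "lp (\<lambda>w. K w (a e) - K w (b e)) (a e) = 0"
    using edges_D_const[OF assms(1) _ subset_refl] by (intro lap_zero_edges) simp
  moreover have "lp (\<lambda>w. K w (a e) - K w (b e)) (a e) = 1"
    using assms endsV by (simp add: lap_diff lapK)
  ultimately show False by simp
qed

lemma re_lt: assumes "e \<in> E" "\<not> is_bridge V E ends e" shows "re e < Len e"
proof -
  have conn: "graph_connected V (E - {e}) ends" using assms by (simp add: is_bridge_def)
  have r0: "re e \<ge> 0" using re_nonneg assms by simp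
  have L: "Len e > 0" using Lpos assms by simp
  have S: "(\<Sum>e'\<in>E - {e}. (D e' (a e) - D e' (b e))^2 / Len e') \<ge> 0"
    by (auto intro!: sum_nonneg sqdiv_nonneg)
  have le: "re e \<le> Len e"
  proof (rule ccontr)
    assume "\<not> re e \<le> Len e"
    then have "re e ^ 2 / Len e > re e" using L by (simp add: power2_eq_square field_simps)
    then show False using thomson_ab[OF assms(1)] S by simp
  qed
  show ?thesis
  proof (rule ccontr)
    assume "\<not> re e < Len e"
    then have eq: "re e = Len e" using le by simp
    then have "(\<Sum>e'\<in>E - {e}. (D e' (a e) - D e' (b e))^2 / Len e') = 0"
      using thomson_ab[OF assms(1)] L by (simp add: power2_eq_square)
    then have "\<forall>e'\<in>E - {e}. (D e' (a e) - D e' (b e))^2 / Len e' = 0"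
      using finE sqdiv_nonneg by (subst (asm) sum_nonneg_eq_0_iff) auto
    then have "\<forall>e'\<in>E - {e}. D e' (a e) - D e' (b e) = 0" using Lpos by force
    then have c: "\<forall>e'\<in>E - {e}. (\<lambda>w. K w (a e) - K w (b e)) (a e') = (\<lambda>w. K w (a e) - K w (b e)) (b e')"
      using edges_D_const[OF assms(1)] by blast
    have "(\<lambda>w. K w (a e) - K w (b e)) (a e) = (\<lambda>w. K w (a e) - K w (b e)) (b e)"
      using rtrancl_const[OF c] conn endsV[OF assms(1)] by (auto simp: graph_connected_def)
    then have "re e = 0"
      using D_diff[OF assms(1), of "a e" "b e"] endsV[OF assms(1)] by (simp add: re_def)
    then show False using eq L by simp
  qed
qed

lemma bridge_u: assumes "e \<in> E" "is_bridge V E ends e"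
  shows "re e = Len e" and "\<And>w. w \<in> V \<Longrightarrow> u e w = (if (a e, w) \<in> (adj (E - {e}) ends)\<^sup>* then Len e else 0)"
proof -
  define Cm where "Cm = (adj (E - {e}) ends)\<^sup>*"
  have nab: "(a e, b e) \<notin> Cm" using bridge_iff[OF C assms(1) endsV[OF assms(1)]] assms(2) by (simp add: Cm_def)
  define k where "k = (\<lambda>w. if (a e, w) \<in> Cm then Len e else 0)"
  have L: "Len e > 0" using Lpos assms by simp
  have closed: "(a e, a e') \<in> Cm \<longleftrightarrow> (a e, b e') \<in> Cm" if "e' \<in> E - {e}" for e'
  proof -
    have "(a e', b e') \<in> adj (E - {e}) ends" using that by (auto simp: adj_def)
    moreover have "(b e', a e') \<in> adj (E - {e}) ends"
      unfolding adj_def mem_Collect_eq case_prod_conv using that by (intro bexI[of _ e']) auto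
    ultimately have h1: "(a e', b e') \<in> Cm" and h2: "(b e', a e') \<in> Cm" unfolding Cm_def by auto
    show ?thesis
    proof
      assume "(a e, a e') \<in> Cm" then show "(a e, b e') \<in> Cm"
        using h1 unfolding Cm_def by (rule rtrancl_trans)
    next
      assume "(a e, b e') \<in> Cm" then show "(a e, a e') \<in> Cm"
        using h2 unfolding Cm_def by (rule rtrancl_trans)
    qed
  qed
  have v: "is_voltage V E ends Len (b e) (a e) k"
    unfolding is_voltage_lap
  proof
    show "k (b e) = 0" using nab by (simp add: k_def)
    show "\<forall>x\<in>V. lp k x = (if x = a e then 1 else 0) - (if x = b e then 1 else 0)"
    proof
      fix x assume "x \<in> V"
      have "lp k x = et ends Len k x e + lap (E - {e}) ends Len k x" by (rule lap_remove[OF finE assms(1)])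
      moreover have "lap (E - {e}) ends Len k x = 0"
      proof (rule lap_zero_edges, intro ballI)
        fix e' assume "e' \<in> E - {e}"
        then show "k (a e') = k (b e')" using closed[of e'] by (simp add: k_def)
      qed
      moreover have "et ends Len k x e = (if x = a e then 1 else 0) - (if x = b e then 1 else 0)"
      proof -
        have ka: "k (a e) = Len e" by (simp add: k_def Cm_def)
        have kb: "k (b e) = 0" using nab by (simp add: k_def)
        have ab: "a e \<noteq> b e"
        proof
          assume "a e = b e" then have "(a e, b e) \<in> Cm" by (simp add: Cm_def)
          with nab show False by simp
        qed
        show ?thesis unfolding et_def using ka kb ab L by simp
      qed
      ultimately show "lp k x = (if x = a e then 1 else 0) - (if x = b e then 1 else 0)" by simp
    qed
  qed
  have uk: "w \<in> V \<Longrightarrow> u e w = k w" for w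
    using jvolt_eq[OF N C endsV(2)[OF assms(1)] _ v] u_jvolt[OF assms(1)] by simp
  show "\<And>w. w \<in> V \<Longrightarrow> u e w = (if (a e, w) \<in> (adj (E - {e}) ends)\<^sup>* then Len e else 0)"
    using uk by (simp add: k_def Cm_def)
  show "re e = Len e" using uk[of "a e"] endsV[OF assms(1)] u_a by (simp add: k_def Cm_def)
qed

end

lemma lim_frac: assumes l: "(l::real) > 0"
  shows "((\<lambda>R. R / (l + R)) \<longlongrightarrow> 1) at_top"
proof -
  have inf: "filterlim (\<lambda>R::real. l + R) at_top at_top"
    by (rule filterlim_tendsto_add_at_top[OF tendsto_const filterlim_ident])
  have "((\<lambda>R. inverse (l + R)) \<longlongrightarrow> 0) at_top" using tendsto_inverse_0_at_top[OF inf] .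
  then have t: "((\<lambda>R. 1 - l * inverse (l + R)) \<longlongrightarrow> 1 - l * 0) at_top" by (intro tendsto_intros)
  have ev: "\<forall>\<^sub>F R in at_top. 1 - l * inverse (l + R) = R / (l + R)"
    using eventually_gt_at_top[of 0] by eventually_elim (use l in \<open>simp add: field_simps\<close>)
  show ?thesis using tendsto_cong[OF ev] t by simp
qed

lemma Lim_frac: "(l::real) > 0 \<Longrightarrow> Lim at_top (\<lambda>R. R / (l + R)) = 1"
  by (rule tendsto_Lim[OF trivial_limit_at_top_linorder lim_frac])

lemma Lim_sq: assumes l: "(l::real) > 0" shows "Lim at_top (\<lambda>R. l * R^2 / (l + R)^2) = l"
proof -
  have "((\<lambda>R. l * (R / (l + R))^2) \<longlongrightarrow> l * 1^2) at_top"
    by (intro tendsto_intros lim_frac[OF l])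
  then have "((\<lambda>R. l * R^2 / (l + R)^2) \<longlongrightarrow> l) at_top" by (simp add: power_divide)
  then show ?thesis by (rule tendsto_Lim[OF trivial_limit_at_top_linorder])
qed

lemma Lim_zero: "Lim at_top (\<lambda>R::real. (0::real)) = 0"
  by (rule tendsto_Lim[OF trivial_limit_at_top_linorder tendsto_const])

context cnet begin

lemma et_u: "e \<in> E \<Longrightarrow> et ends Len (u e) x e = ((if x = a e then 1 else 0) - (if x = b e then 1 else 0)) * re e / Len e"
  by (cases "a e = b e") (auto simp: et_def u_def re_def)

lemma nb_volt:
  assumes e: "e \<in> E" and nb: "\<not> is_bridge V E ends e" and w: "w \<in> V"
  shows "jvolt V (E - {e}) ends Len (b e) w (a e) = Len e / (Len e - re e) * u e w"
    and "jvolt V (E - {e}) ends Len (a e) w (b e) = Len e / (Len e - re e) * (re e - u e w)"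
    and "R_edge V E ends Len e = Len e / (Len e - re e) * re e"
proof -
  have N': "netw V (E - {e}) ends Len" by (rule netw_remove[OF N])
  have C': "graph_connected V (E - {e}) ends" using nb by (simp add: is_bridge_def)
  define c where "c = Len e / (Len e - re e)"
  have lt: "re e < Len e" by (rule re_lt[OF e nb])
  have L: "Len e > 0" using Lpos e by simp
  have c1: "c * (1 - re e / Len e) = 1" using lt L by (simp add: c_def field_simps)
  have lapu': "lap (E - {e}) ends Len (u e) x = ((if x = a e then 1 else 0) - (if x = b e then 1 else 0)) * (1 - re e / Len e)"
    if "x \<in> V" for x
  proof -
    define d where "d = (if x = a e then 1 else 0) - (if x = b e then (1::real) else 0)"
    have h1: "lap E ends Len (u e) x = et ends Len (u e) x e + lap (E - {e}) ends Len (u e) x"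
      by (rule lap_remove[OF finE e])
    have h2: "lap E ends Len (u e) x = d" using lap_u[OF e that] by (simp add: d_def)
    have h3: "et ends Len (u e) x e = d * re e / Len e" using et_u[OF e, of x] by (simp add: d_def)
    have "lap (E - {e}) ends Len (u e) x = d * (1 - re e / Len e)"
      using h1 h2 h3 by (simp add: algebra_simps)
    then show ?thesis by (simp add: d_def)
  qed
  have v1: "is_voltage V (E - {e}) ends Len (b e) (a e) (\<lambda>w. c * u e w)"
    unfolding is_voltage_lap
  proof
    show "c * u e (b e) = 0" by (simp add: u_b)
    show "\<forall>x\<in>V. lap (E - {e}) ends Len (\<lambda>w. c * u e w) x = (if x = a e then 1 else 0) - (if x = b e then 1 else 0)"
    proof
      fix x assume "x \<in> V"
      then have "lap (E - {e}) ends Len (\<lambda>w. c * u e w) x = ((if x = a e then 1 else 0) - (if x = b e then 1 else 0)) * (c * (1 - re e / Len e))"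
        by (simp add: lap_scale lapu')
      then show "lap (E - {e}) ends Len (\<lambda>w. c * u e w) x = (if x = a e then 1 else 0) - (if x = b e then 1 else 0)"
        using c1 by simp
    qed
  qed
  have v2: "is_voltage V (E - {e}) ends Len (a e) (b e) (\<lambda>w. c * (re e - u e w))"
    unfolding is_voltage_lap
  proof
    show "c * (re e - u e (a e)) = 0" by (simp add: u_a)
    show "\<forall>x\<in>V. lap (E - {e}) ends Len (\<lambda>w. c * (re e - u e w)) x = (if x = b e then 1 else 0) - (if x = a e then 1 else 0)"
    proof
      fix x assume x: "x \<in> V"
      have "(\<lambda>w. c * (re e - u e w)) = (\<lambda>w. (\<lambda>w. (- c) * u e w) w + c * re e)"
        by (auto simp: fun_eq_iff algebra_simps)
      then have "lap (E - {e}) ends Len (\<lambda>w. c * (re e - u e w)) x = (- c) * lap (E - {e}) ends Len (u e) x"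
        by (simp only: lap_const lap_scale)
      also have "\<dots> = - (((if x = a e then 1 else 0) - (if x = b e then 1 else 0)) * (c * (1 - re e / Len e)))"
        using x by (simp add: lapu')
      finally show "lap (E - {e}) ends Len (\<lambda>w. c * (re e - u e w)) x = (if x = b e then 1 else 0) - (if x = a e then 1 else 0)"
        using c1 by simp
    qed
  qed
  show "jvolt V (E - {e}) ends Len (b e) w (a e) = Len e / (Len e - re e) * u e w"
    using jvolt_eq[OF N' C' endsV(2)[OF e] w v1] by (simp add: c_def)
  show "jvolt V (E - {e}) ends Len (a e) w (b e) = Len e / (Len e - re e) * (re e - u e w)"
    using jvolt_eq[OF N' C' endsV(1)[OF e] w v2] by (simp add: c_def)
  show "R_edge V E ends Len e = Len e / (Len e - re e) * re e"
    using jvolt_eq[OF N' C' endsV(2)[OF e] endsV(1)[OF e] v1]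
    by (simp add: R_edge_def eff_res_def c_def u_a)
qed

lemma ev1: assumes e: "e \<in> E" and p: "p \<in> V"
  shows "edge_val V E ends Len p e (\<lambda>R Ra Rb. R / (Len e + R)) = re e / Len e"
proof (cases "is_bridge V E ends e")
  case True
  then show ?thesis using bridge_u[OF e True] Lim_frac[OF Lpos[OF e]] Lpos[OF e]
    by (simp add: edge_val_def Let_def)
next
  case False
  have lt: "re e < Len e" by (rule re_lt[OF e False])
  have L: "Len e > 0" using Lpos e by simp
  have ne: "Len e - re e \<noteq> 0" using lt by simp
  show ?thesis using False lt L ne
    by (simp add: edge_val_def nb_volt(3)[OF e False p] field_simps)
qed

lemma ev3: assumes e: "e \<in> E" and p: "p \<in> V"
  shows "edge_val V E ends Len p e (\<lambda>R Ra Rb. Len e * R^2 / (Len e + R)^2) = re e ^ 2 / Len e"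
proof (cases "is_bridge V E ends e")
  case True
  then show ?thesis using bridge_u[OF e True] Lim_sq[OF Lpos[OF e]] Lpos[OF e]
    by (simp add: edge_val_def Let_def power2_eq_square)
next
  case False
  have lt: "re e < Len e" by (rule re_lt[OF e False])
  have L: "Len e > 0" using Lpos e by simp
  have ne: "Len e - re e \<noteq> 0" using lt by simp
  define c where "c = Len e / (Len e - re e)"
  have c0: "c \<noteq> 0" using L ne by (simp add: c_def)
  have h: "Len e + c * re e = c * Len e" using ne by (simp add: c_def field_simps)
  have "edge_val V E ends Len p e (\<lambda>R Ra Rb. Len e * R^2 / (Len e + R)^2)
      = Len e * (c * re e)^2 / (Len e + c * re e)^2"
    using False by (simp add: edge_val_def nb_volt[OF e False p] c_def)
  also have "\<dots> = re e ^ 2 / Len e"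
    unfolding h using c0 L by (simp add: power2_eq_square field_simps)
  finally show ?thesis .
qed

lemma ev2: assumes e: "e \<in> E" and p: "p \<in> V"
  shows "edge_val V E ends Len p e (\<lambda>R Ra Rb. Len e * Ra * Rb / (Len e + R)^2) = u e p * (re e - u e p) / Len e"
proof (cases "is_bridge V E ends e")
  case True
  have "u e p * (re e - u e p) = 0" using bridge_u[OF e True] p by simp
  then show ?thesis using True Lim_zero
    by (cases "(a e, p) \<in> (adj (E - {e}) ends)\<^sup>*") (simp_all add: edge_val_def Let_def)
next
  case False
  have lt: "re e < Len e" by (rule re_lt[OF e False])
  have L: "Len e > 0" using Lpos e by simp
  have ne: "Len e - re e \<noteq> 0" using lt by simp
  define c where "c = Len e / (Len e - re e)"
  have c0: "c \<noteq> 0" using L ne by (simp add: c_def)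
  have h: "Len e + c * re e = c * Len e" using ne by (simp add: c_def field_simps)
  have "edge_val V E ends Len p e (\<lambda>R Ra Rb. Len e * Ra * Rb / (Len e + R)^2)
      = Len e * (c * (re e - u e p)) * (c * u e p) / (Len e + c * re e)^2"
    using False by (simp add: edge_val_def nb_volt[OF e False p] c_def)
  also have "\<dots> = u e p * (re e - u e p) / Len e"
    unfolding h using c0 L by (simp add: power2_eq_square field_simps)
  finally show ?thesis .
qed

end

context cnet begin

lemma contr:
  assumes e: "e \<in> E" and ab: "a e \<noteq> b e"
  shows "Kf_contract V E ends Len e = (1/2) * (\<Sum>x\<in>V - {b e}. \<Sum>y\<in>V - {b e}. res x y - (u e x - u e y)^2 / re e)"
proof -
  define m where "m = contr_map ends e"
  define V' where "V' = m ` V"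
  define E' where "E' = E - {e}"
  define ends' where "ends' = map_prod m m \<circ> ends"
  have mx: "\<And>x. m x = (if x = b e then a e else x)" by (simp add: m_def contr_map_def)
  have aV: "a e \<in> V" and bV: "b e \<in> V" using endsV e by auto
  have V'eq: "V' = V - {b e}"
  proof
    show "V' \<subseteq> V - {b e}" using aV ab by (auto simp: V'_def mx)
    show "V - {b e} \<subseteq> V'"
    proof
      fix x assume "x \<in> V - {b e}"
      then have "x = m x" "x \<in> V" by (auto simp: mx)
      then show "x \<in> V'" unfolding V'_def by blast
    qed
  qed
  have ends'_simp: "\<And>e'. fst (ends' e') = m (a e')" "\<And>e'. snd (ends' e') = m (b e')"
    by (simp_all add: ends'_def map_prod_def split_beta)
  have N': "netw V' E' ends' Len"
    using finV finE endsV Lpos unfolding netw_def V'_def E'_def ends'_simp by auto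
  have rt: "(m x, m y) \<in> (adj E' ends')\<^sup>*" if "(x, y) \<in> (adj E ends)\<^sup>*" for x y
    using that
  proof (induction rule: rtrancl_induct)
    case base then show ?case by simp
  next
    case (step y z)
    from step(2) obtain e' where e': "e' \<in> E" "ends e' = (y, z) \<or> ends e' = (z, y)" by (auto simp: adj_def)
    show ?case
    proof (cases "e' = e")
      case True
      have "(a e = y \<and> b e = z) \<or> (a e = z \<and> b e = y)" using e'(2) True by auto
      then have "m y = m z" using ab by (auto simp: mx)
      then show ?thesis using step(3) by simp
    next
      case False
      then have "ends' e' = (m y, m z) \<or> ends' e' = (m z, m y)" using e' by (auto simp: ends'_def)
      then have "(m y, m z) \<in> adj E' ends'" using False e' unfolding adj_def E'_def by blast
      then show ?thesis using step(3) by (meson rtrancl.rtrancl_into_rtrancl)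
    qed
  qed
  have C': "graph_connected V' E' ends'"
    unfolding graph_connected_def
  proof (intro ballI)
    fix x y assume "x \<in> V'" "y \<in> V'"
    then have xy: "x \<in> V" "y \<in> V" "m x = x" "m y = y" unfolding V'eq by (auto simp: mx)
    then have "(x, y) \<in> (adj E ends)\<^sup>*" using C by (simp add: graph_connected_def)
    then show "(x, y) \<in> (adj E' ends')\<^sup>*" using rt xy by metis
  qed
  have lapc: "lap E' ends' Len w t = (if t = a e then lp w (a e) + lp w (b e) else lp w t)"
    if wab: "w (a e) = w (b e)" and t: "t \<in> V - {b e}" for w t
  proof -
    have eq0: "et ends Len w s e = 0" for s using wab by (auto simp: et_def)
    have lr: "lp w s = lap E' ends Len w s" for s
      using lap_remove[OF finE e, of ends Len w s] eq0 by (simp add: E'_def)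
    have per: "et ends' Len w t e' = (if t = a e then et ends Len w (a e) e' + et ends Len w (b e) e' else et ends Len w t e')"
      for e'
      using wab t ab unfolding et_def ends'_simp mx by auto
    show ?thesis
    proof (cases "t = a e")
      case True
      have "lap E' ends' Len w t = (\<Sum>e'\<in>E'. et ends Len w (a e) e' + et ends Len w (b e) e')"
        unfolding lap_et using per True by simp
      then show ?thesis using True by (simp add: sum.distrib lr lap_et[of E' ends])
    next
      case False
      have "lap E' ends' Len w t = (\<Sum>e'\<in>E'. et ends Len w t e')"
        unfolding lap_et using per False by simp
      then show ?thesis using False by (simp add: lr lap_et[of E' ends])
    qed
  qed
  have rpos: "re e > 0" by (rule re_pos[OF e ab])
  have main: "eff_res V' E' ends' Len x y = res x y - (u e x - u e y)^2 / re e"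
    if x: "x \<in> V - {b e}" and y: "y \<in> V - {b e}" for x y
  proof -
    define \<phi> where "\<phi> = (\<lambda>t. K t x - K t y)"
    define cc where "cc = (u e x - u e y) / re e"
    define wv where "wv = (\<lambda>t. (\<lambda>t. \<phi> t - cc * u e t) t + (cc * u e y - \<phi> y))"
    have xV: "x \<in> V" and yV: "y \<in> V" and xb: "x \<noteq> b e" and yb: "y \<noteq> b e" using x y by auto
    have phab: "\<phi> (a e) - \<phi> (b e) = u e x - u e y"
      using D_diff[OF e xV yV] by (simp add: \<phi>_def u_def)
    have wab: "wv (a e) = wv (b e)"
    proof -
      have "wv (a e) - wv (b e) = (\<phi> (a e) - \<phi> (b e)) - cc * (u e (a e) - u e (b e))"
        by (simp add: wv_def algebra_simps)
      also have "\<dots> = 0" using rpos by (simp add: phab u_a u_b cc_def)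
      finally show ?thesis by simp
    qed
    have lapw: "lp wv s = ((if s = x then 1 else 0) - (if s = y then 1 else 0))
                         - cc * ((if s = a e then 1 else 0) - (if s = b e then 1 else 0))" if "s \<in> V" for s
      unfolding wv_def lap_const lap_diff[of E ends Len \<phi> "\<lambda>t. cc * u e t"] lap_scale
      using that xV yV e by (simp add: \<phi>_def lap_diff lapK lap_u)
    have v: "is_voltage V' E' ends' Len y x wv"
      unfolding is_voltage_lap
    proof
      show "wv y = 0" by (simp add: wv_def)
      show "\<forall>t\<in>V'. lap E' ends' Len wv t = (if t = x then 1 else 0) - (if t = y then 1 else 0)"
      proof
        fix t assume "t \<in> V'"
        then have t: "t \<in> V - {b e}" by (simp add: V'eq)
        show "lap E' ends' Len wv t = (if t = x then 1 else 0) - (if t = y then 1 else 0)"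
          using lapc[OF wab t] t lapw aV bV xb yb ab by auto
      qed
    qed
    have "eff_res V' E' ends' Len x y = wv x"
      unfolding eff_res_def using jvolt_eq[OF N' C' _ _ v] x y by (simp add: V'eq)
    also have "\<dots> = res x y - (u e x - u e y)^2 / re e"
      using xV yV rpos by (simp add: wv_def \<phi>_def cc_def res_K K_sym power2_eq_square field_simps)
    finally show ?thesis .
  qed
  have "Kf_contract V E ends Len e = Kf V' E' ends' Len"
    by (simp add: Kf_contract_def V'_def E'_def ends'_def m_def)
  also have "\<dots> = (1/2) * (\<Sum>x\<in>V - {b e}. \<Sum>y\<in>V - {b e}. eff_res V' E' ends' Len x y)"
    by (simp add: Kf_def V'eq)
  also have "\<dots> = (1/2) * (\<Sum>x\<in>V - {b e}. \<Sum>y\<in>V - {b e}. res x y - (u e x - u e y)^2 / re e)"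
    using main by simp
  finally show ?thesis .
qed

end

lemma sum_remove2:
  assumes "finite V" "b \<in> V"
  shows "(\<Sum>x\<in>V - {b}. \<Sum>y\<in>V - {b}. (h x y :: real)) =
         (\<Sum>x\<in>V. \<Sum>y\<in>V. h x y) - (\<Sum>x\<in>V. h x b) - (\<Sum>y\<in>V. h b y) + h b b"
proof -
  have "(\<Sum>x\<in>V - {b}. \<Sum>y\<in>V - {b}. h x y) = (\<Sum>x\<in>V - {b}. (\<Sum>y\<in>V. h x y) - h x b)"
    using assms by (simp add: sum_diff1)
  also have "\<dots> = (\<Sum>x\<in>V - {b}. \<Sum>y\<in>V. h x y) - (\<Sum>x\<in>V - {b}. h x b)"
    by (simp add: sum_subtractf)
  also have "\<dots> = ((\<Sum>x\<in>V. \<Sum>y\<in>V. h x y) - (\<Sum>y\<in>V. h b y)) - ((\<Sum>x\<in>V. h x b) - h b b)"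
    using assms by (simp add: sum_diff1)
  finally show ?thesis by simp
qed

lemma edge_identity:
  fixes r :: "'v \<Rightarrow> 'v \<Rightarrow> real" and u :: "'v \<Rightarrow> real"
  assumes fin: "finite V" and V: "a \<in> V" "b \<in> V" "p \<in> V"
    and sym: "\<And>x y. x \<in> V \<Longrightarrow> y \<in> V \<Longrightarrow> r x y = r y x" and rbb: "r b b = 0"
    and ub: "u b = 0" and pt: "\<And>y. y \<in> V \<Longrightarrow> r a y - r b y = \<rho> - 2 * u y"
    and zero: "\<rho> = 0 \<Longrightarrow> (\<forall>x\<in>V. u x = 0)"
  shows "(\<rho> / l) * (\<Sum>x\<in>V - {b}. \<Sum>y\<in>V - {b}. r x y - (u x - u y)^2 / \<rho>)
      + 2 * real (card V) * (u p * (\<rho> - u p) / l) - real (card V) * (\<rho>^2 / l)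
      + (\<Sum>w\<in>V. (\<rho> / l) * (r a w + r b w))
    = (\<rho> / l) * (\<Sum>x\<in>V. \<Sum>y\<in>V. r x y) - (1 / l) * (\<Sum>x\<in>V. \<Sum>y\<in>V. (u x - u y)^2)
      + (2 / l) * (\<Sum>y\<in>V. (u y - u p) * (u y + u p - \<rho>))"
proof -
  define n where "n = real (card V)"
  define SR where "SR = (\<Sum>x\<in>V. \<Sum>y\<in>V. r x y)"
  define SQ where "SQ = (\<Sum>x\<in>V. \<Sum>y\<in>V. (u x - u y)^2)"
  define Rb where "Rb = (\<Sum>y\<in>V. r b y)"
  define U1 where "U1 = (\<Sum>y\<in>V. u y)"
  define U2 where "U2 = (\<Sum>y\<in>V. (u y)^2)"
  have A: "(\<Sum>x\<in>V - {b}. \<Sum>y\<in>V - {b}. r x y) = SR - 2 * Rb"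
  proof -
    have "(\<Sum>x\<in>V. r x b) = Rb" unfolding Rb_def using sym V by (intro sum.cong) auto
    then show ?thesis using sum_remove2[OF fin V(2), of r] rbb by (simp add: SR_def Rb_def)
  qed
  have B: "(\<Sum>x\<in>V - {b}. \<Sum>y\<in>V - {b}. (u x - u y)^2) = SQ - 2 * U2"
    using sum_remove2[OF fin V(2), of "\<lambda>x y. (u x - u y)^2"] ub
    by (simp add: SQ_def U2_def power2_eq_square)
  have AB: "(\<rho> / l) * (\<Sum>x\<in>V - {b}. \<Sum>y\<in>V - {b}. r x y - (u x - u y)^2 / \<rho>)
      = (\<rho> * (SR - 2 * Rb) - (SQ - 2 * U2)) / l"
  proof (cases "\<rho> = 0")
    case True
    then have "SQ = 0" "U2 = 0" using zero by (simp_all add: SQ_def U2_def)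
    then show ?thesis using True by simp
  next
    case False
    have "(\<Sum>x\<in>V - {b}. \<Sum>y\<in>V - {b}. r x y - (u x - u y)^2 / \<rho>)
       = (\<Sum>x\<in>V - {b}. \<Sum>y\<in>V - {b}. r x y) - (\<Sum>x\<in>V - {b}. \<Sum>y\<in>V - {b}. (u x - u y)^2) / \<rho>"
      by (simp add: sum_subtractf sum_divide_distrib)
    then show ?thesis using False by (simp add: A B field_simps)
  qed
  have W: "(\<Sum>w\<in>V. (\<rho> / l) * (r a w + r b w)) = (\<rho> / l) * (n * \<rho> - 2 * U1 + 2 * Rb)"
  proof -
    have "(\<Sum>w\<in>V. r a w + r b w) = (\<Sum>w\<in>V. (\<rho> - 2 * u w) + 2 * r b w)"
      using pt by (intro sum.cong) (auto simp: algebra_simps)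
    also have "\<dots> = n * \<rho> - 2 * U1 + 2 * Rb"
      by (simp add: sum.distrib sum_subtractf sum_distrib_left[symmetric] n_def U1_def Rb_def)
    finally show ?thesis by (simp add: sum_distrib_left[symmetric] sum_divide_distrib[symmetric])
  qed
  have T: "(\<Sum>y\<in>V. (u y - u p) * (u y + u p - \<rho>)) = U2 - \<rho> * U1 - n * (u p)^2 + n * \<rho> * u p"
  proof -
    have "(\<Sum>y\<in>V. (u y - u p) * (u y + u p - \<rho>)) = (\<Sum>y\<in>V. (u y)^2 - \<rho> * u y - ((u p)^2 - \<rho> * u p))"
      by (intro sum.cong) (auto simp: algebra_simps power2_eq_square)
    also have "\<dots> = U2 - \<rho> * U1 - n * ((u p)^2 - \<rho> * u p)"
      by (simp add: sum_subtractf sum_distrib_left[symmetric] n_def U1_def U2_def)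
    finally show ?thesis by (simp add: algebra_simps)
  qed
  show ?thesis
    unfolding AB W T SR_def[symmetric] SQ_def[symmetric] n_def[symmetric]
    by (simp add: divide_inverse algebra_simps power2_eq_square)
qed


context cnet begin

lemma E4: assumes e: "e \<in> E" and p: "p \<in> V"
  shows "edge_val V E ends Len p e (\<lambda>R Ra Rb. R / (Len e + R)) * Kf_contract V E ends Len e
     = (re e / Len e) * ((1/2) * (\<Sum>x\<in>V - {b e}. \<Sum>y\<in>V - {b e}. res x y - (u e x - u e y)^2 / re e))"
proof (cases "a e = b e")
  case True
  then have "re e = 0" by (simp add: re_def)
  then show ?thesis using ev1[OF e p] by simp
next
  case False
  then show ?thesis by (simp only: ev1[OF e p] contr[OF e False])
qed

lemma pt: "e \<in> E \<Longrightarrow> y \<in> V \<Longrightarrow> res (a e) y - res (b e) y = re e - 2 * u e y"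
  using endsV[of e] by (simp add: res_K re_def u_def D_def K_sym algebra_simps)

lemma zero_u: assumes e: "e \<in> E" and r0: "re e = 0" shows "\<forall>x\<in>V. u e x = 0"
proof (cases "a e = b e")
  case True
  then show ?thesis by (simp add: u_def D_def)
next
  case False
  then show ?thesis using re_pos[OF e False] r0 by simp
qed

lemma final:
  shows "2 * (real (card V) - 2) * Kf V E ends Len =
      2 * (\<Sum>e\<in>E. edge_val V E ends Len g0 e (\<lambda>R Ra Rb. R / (Len e + R))
                  * Kf_contract V E ends Len e)
    + 2 * real (card V) * (\<Sum>e\<in>E. edge_val V E ends Len g0 e
                  (\<lambda>R Ra Rb. Len e * Ra * Rb / (Len e + R)\<^sup>2))
    - real (card V) * (\<Sum>e\<in>E. edge_val V E ends Len g0 e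
                  (\<lambda>R Ra Rb. Len e * R\<^sup>2 / (Len e + R)\<^sup>2))
    + (\<Sum>w\<in>V. \<Sum>e\<in>E. edge_val V E ends Len g0 e (\<lambda>R Ra Rb. R / (Len e + R))
                  * (eff_res V E ends Len (fst (ends e)) w + eff_res V E ends Len (snd (ends e)) w))"
proof -
  define n where "n = real (card V)"
  define SR where "SR = (\<Sum>x\<in>V. \<Sum>y\<in>V. res x y)"
  define A' where "A' e = (\<Sum>x\<in>V - {b e}. \<Sum>y\<in>V - {b e}. res x y - (u e x - u e y)^2 / re e)" for e
  define Y where "Y e = (re e / Len e) * A' e + 2 * n * (u e g0 * (re e - u e g0) / Len e)
      - n * (re e ^ 2 / Len e) + (\<Sum>w\<in>V. (re e / Len e) * (res (a e) w + res (b e) w))" for e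
  define Z where "Z e = (re e / Len e) * SR - (1 / Len e) * (\<Sum>x\<in>V. \<Sum>y\<in>V. (u e x - u e y)^2)
      + (2 / Len e) * (\<Sum>y\<in>V. (u e y - u e g0) * (u e y + u e g0 - re e))" for e
  have e1: "(\<Sum>e\<in>E. edge_val V E ends Len g0 e (\<lambda>R Ra Rb. R / (Len e + R)) * Kf_contract V E ends Len e)
      = (\<Sum>e\<in>E. (re e / Len e) * ((1/2) * A' e))"
    by (rule sum.cong[OF refl]) (simp add: E4 g0 A'_def)
  have e2: "(\<Sum>e\<in>E. edge_val V E ends Len g0 e (\<lambda>R Ra Rb. Len e * Ra * Rb / (Len e + R)\<^sup>2))
      = (\<Sum>e\<in>E. u e g0 * (re e - u e g0) / Len e)"
    by (rule sum.cong[OF refl]) (simp add: ev2 g0)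
  have e3: "(\<Sum>e\<in>E. edge_val V E ends Len g0 e (\<lambda>R Ra Rb. Len e * R\<^sup>2 / (Len e + R)\<^sup>2))
      = (\<Sum>e\<in>E. re e ^ 2 / Len e)"
    by (rule sum.cong[OF refl]) (simp add: ev3 g0)
  have e4: "(\<Sum>w\<in>V. \<Sum>e\<in>E. edge_val V E ends Len g0 e (\<lambda>R Ra Rb. R / (Len e + R))
                  * (res (fst (ends e)) w + res (snd (ends e)) w))
      = (\<Sum>e\<in>E. \<Sum>w\<in>V. (re e / Len e) * (res (a e) w + res (b e) w))"
    by (subst sum.swap) (intro sum.cong refl, simp add: ev1 g0)
  have RY: "2 * (\<Sum>e\<in>E. (re e / Len e) * ((1/2) * A' e)) + 2 * n * (\<Sum>e\<in>E. u e g0 * (re e - u e g0) / Len e)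
      - n * (\<Sum>e\<in>E. re e ^ 2 / Len e) + (\<Sum>e\<in>E. \<Sum>w\<in>V. (re e / Len e) * (res (a e) w + res (b e) w))
      = (\<Sum>e\<in>E. Y e)"
    by (simp add: Y_def sum.distrib sum_subtractf sum_distrib_left algebra_simps)
  have YZ: "Y e = Z e" if e: "e \<in> E" for e
    unfolding Y_def Z_def A'_def SR_def n_def
    by (rule edge_identity[OF finV endsV(1)[OF e] endsV(2)[OF e] g0 res_sym res_self[OF endsV(2)[OF e]]
          u_b pt[OF e] zero_u[OF e]])
  have f1: "(\<Sum>e\<in>E. (re e / Len e) * SR) = (n - 1) * SR"
    unfolding sum_distrib_right[symmetric] using foster by (simp add: re_def n_def)
  have f2: "(\<Sum>e\<in>E. (1 / Len e) * (\<Sum>x\<in>V. \<Sum>y\<in>V. (u e x - u e y)^2)) = SR"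
  proof -
    have "(\<Sum>e\<in>E. (1 / Len e) * (\<Sum>x\<in>V. \<Sum>y\<in>V. (u e x - u e y)^2))
        = (\<Sum>e\<in>E. \<Sum>x\<in>V. \<Sum>y\<in>V. (D e x - D e y)^2 / Len e)"
      by (simp add: sum_distrib_left u_def)
    also have "\<dots> = (\<Sum>x\<in>V. \<Sum>e\<in>E. \<Sum>y\<in>V. (D e x - D e y)^2 / Len e)"
      by (rule sum.swap)
    also have "\<dots> = (\<Sum>x\<in>V. \<Sum>y\<in>V. \<Sum>e\<in>E. (D e x - D e y)^2 / Len e)"
      by (rule sum.cong[OF refl], rule sum.swap)
    also have "\<dots> = SR" unfolding SR_def
      by (rule sum.cong[OF refl], rule sum.cong[OF refl]) (simp add: thomson)
    finally show ?thesis .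
  qed
  have f3: "(\<Sum>e\<in>E. (2 / Len e) * (\<Sum>y\<in>V. (u e y - u e g0) * (u e y + u e g0 - re e))) = 0"
  proof -
    have "(\<Sum>e\<in>E. (2 / Len e) * (\<Sum>y\<in>V. (u e y - u e g0) * (u e y + u e g0 - re e)))
       = 2 * (\<Sum>y\<in>V. \<Sum>e\<in>E. (D e y - D e g0) * (D e y + D e g0 - D e (a e) - D e (b e)) / Len e)"
      apply (subst sum.swap)
      apply (simp add: sum_distrib_left u_def re_def)
      apply (rule sum.cong[OF refl])+
      apply (simp add: algebra_simps)
      done
    also have "\<dots> = 0" using tau g0 by simp
    finally show ?thesis .
  qed
  have "(\<Sum>e\<in>E. Y e) = (\<Sum>e\<in>E. Z e)" using YZ by (rule sum.cong[OF refl])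
  also have "\<dots> = (n - 1) * SR - SR + 0"
    unfolding Z_def using f1 f2 f3 by (simp add: sum.distrib sum_subtractf)
  finally have SY: "(\<Sum>e\<in>E. Y e) = (n - 2) * SR" by (simp add: algebra_simps)
  show ?thesis
    unfolding e1 e2 e3 e4 RY[unfolded n_def] SY[unfolded n_def]
    by (simp add: Kf_def SR_def n_def)
qed

end
theorem lemma3p2:
  fixes V :: "'v set" and E :: "'e set" and ends :: "'e \<Rightarrow> 'v \<times> 'v"
    and Len :: "'e \<Rightarrow> real" and p :: 'v
  assumes "metrized_graph V E ends Len" and "p \<in> V"
  shows "2 * (real (card V) - 2) * Kf V E ends Len =
      2 * (\<Sum>e\<in>E. edge_val V E ends Len p e (\<lambda>R Ra Rb. R / (Len e + R))
                  * Kf_contract V E ends Len e)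
    + 2 * real (card V) * (\<Sum>e\<in>E. edge_val V E ends Len p e
                  (\<lambda>R Ra Rb. Len e * Ra * Rb / (Len e + R)\<^sup>2))
    - real (card V) * (\<Sum>e\<in>E. edge_val V E ends Len p e
                  (\<lambda>R Ra Rb. Len e * R\<^sup>2 / (Len e + R)\<^sup>2))
    + (\<Sum>w\<in>V. \<Sum>e\<in>E. edge_val V E ends Len p e (\<lambda>R Ra Rb. R / (Len e + R))
                  * (eff_res V E ends Len (fst (ends e)) w + eff_res V E ends Len (snd (ends e)) w))"
proof -
  interpret G: cnet V E ends Len p
    using assms by unfold_locales (auto simp: metrized_graph_def netw_def)
  show ?thesis by (rule G.final)
qed

end
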